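(* Let $\Gamma$ be a distance-regular graph with diameter $D\ge 3$ and valency $k$. Let $\sigma_0,\sigma_1,\dots,\sigma_D$ and $\varepsilon,h$ be real numbers; write $\sigma=\sigma_1$. Then the following are equivalent. (i) $a_1\neq 0$; $\sigma_0,\dots,\sigma_D$ is a feasible pseudo cosine sequence of $\Gamma$, $\varepsilon$ is its auxiliary parameter, and $$h=\frac{(1-\sigma)(1-\sigma_2)}{(\sigma^2-\sigma_2)(1-\varepsilon\sigma)}.$$ (ii) $\sigma_0=1$, $\varepsilon\neq 1$, $\varepsilon\neq -1$, $$k=h\frac{\sigma-\varepsilon}{\sigma-1},$$ $$b_i=h\frac{(\sigma_{i-1}-\sigma\sigma_i)(\sigma_{i+1}-\varepsilon\sigma_i)}{(\sigma_{i-1}-\sigma_{i+1})(\sigma_{i+1}-\sigma_i)}\quad(1\le i\le D-1),$$ $$c_i=h\frac{(\sigma_{i+1}-\sigma\sigma_i)(\sigma_{i-1}-\varepsilon\sigma_i)}{(\sigma_{i+1}-\sigma_{i-1})(\sigma_{i-1}-\sigma_i)}\quad(1\le i\le D-1),$$ and all denominators in these three formulas are nonzero.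
   Context: $\Gamma$ is a finite connected undirected graph without loops or multiple edges, distance-regular with diameter $D$, intersection numbers $a_i,b_i,c_i$ ($c_0=0$, $b_D=0$, $c_1=1$), valency $k=b_0$, $c_i+a_i+b_i=k$. For $\theta\in\mathbb{R}$ the pseudo cosine sequence for $\theta$ is the sequence of reals $\sigma_0,\dots,\sigma_D$ with $\sigma_0=1$ and $c_i\sigma_{i-1}+a_i\sigma_i+b_i\sigma_{i+1}=\theta\sigma_i$ for $0\le i\le D-1$. It is nontrivial if $\sigma_1\ne 1$. Pseudo cosine sequences $\sigma_i$, $\rho_i$ form a tight pair if $(\sigma_i\rho_i)_{i=0}^D$ is a pseudo cosine sequence. For a tight pair of nontrivial pseudo cosine sequences, an auxiliary parameter is a real $\varepsilon$ with $\sigma_i\rho_i-\sigma_{i-1}\rho_{i-1}=\varepsilon(\sigma_{i-1}\rho_i-\sigma_i\rho_{i-1})$ for $1\le i\le D$. When $a_1\neq 0$: a nontrivial pseudo cosine sequence $\sigma_0,\dots,\sigma_D$ is tight if some nontrivial pseudo cosine sequence $\rho_0,\dots,\rho_D$ forms a tight pair with it, and its auxiliary parameter is the (uniquely determined) auxiliary parameter of that pair; a pseudo cosine sequence is feasible if it is tight and $\sigma_{i-1}\neq\sigma_{i+1}$ for $1\le i\le D-1$. *)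

theory Defs
  imports Main "HOL.Real"
begin

text \<open>A graph is given by a vertex set V and a symmetric irreflexive adjacency
relation E (only its restriction to V matters).\<close>

definition simple_graph :: "'a set \<Rightarrow> ('a \<Rightarrow> 'a \<Rightarrow> bool) \<Rightarrow> bool" where
  "simple_graph V E \<longleftrightarrow> finite V \<and> V \<noteq> {} \<and>
     (\<forall>u\<in>V. \<forall>v\<in>V. E u v \<longleftrightarrow> E v u) \<and> (\<forall>u\<in>V. \<not> E u u)"

definition adjrel :: "'a set \<Rightarrow> ('a \<Rightarrow> 'a \<Rightarrow> bool) \<Rightarrow> ('a \<times> 'a) set" where
  "adjrel V E = {(u, v). u \<in> V \<and> v \<in> V \<and> E u v}"

definition connected_graph :: "'a set \<Rightarrow> ('a \<Rightarrow> 'a \<Rightarrow> bool) \<Rightarrow> bool" where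
  "connected_graph V E \<longleftrightarrow> (\<forall>x\<in>V. \<forall>y\<in>V. \<exists>n. (x, y) \<in> adjrel V E ^^ n)"

definition gdist :: "'a set \<Rightarrow> ('a \<Rightarrow> 'a \<Rightarrow> bool) \<Rightarrow> 'a \<Rightarrow> 'a \<Rightarrow> nat" where
  "gdist V E x y = (LEAST n. (x, y) \<in> adjrel V E ^^ n)"

definition diameter :: "'a set \<Rightarrow> ('a \<Rightarrow> 'a \<Rightarrow> bool) \<Rightarrow> nat" where
  "diameter V E = Max {gdist V E x y | x y. x \<in> V \<and> y \<in> V}"

text \<open>Distance-regular with diameter D and intersection numbers a, b, c:
for all vertices x, y at distance i,
 c i = |{z adjacent to y : d(x,z) = i-1}|, a i = |{z adjacent to y : d(x,z) = i}|,
 b i = |{z adjacent to y : d(x,z) = i+1}|.  (For i = 0 the c-count is 0 since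
the graph is loopless.)  The valency is k = b 0.\<close>
definition distance_regular ::
  "'a set \<Rightarrow> ('a \<Rightarrow> 'a \<Rightarrow> bool) \<Rightarrow> nat \<Rightarrow> (nat \<Rightarrow> nat) \<Rightarrow> (nat \<Rightarrow> nat) \<Rightarrow> (nat \<Rightarrow> nat) \<Rightarrow> bool" where
  "distance_regular V E D a b c \<longleftrightarrow>
     simple_graph V E \<and> connected_graph V E \<and> diameter V E = D \<and>
     (\<forall>x\<in>V. \<forall>y\<in>V.
        card {z \<in> V. E y z \<and> gdist V E x z + 1 = gdist V E x y} = c (gdist V E x y) \<and>
        card {z \<in> V. E y z \<and> gdist V E x z = gdist V E x y} = a (gdist V E x y) \<and>
        card {z \<in> V. E y z \<and> gdist V E x z = gdist V E x y + 1} = b (gdist V E x y))"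

definition pseudo_cosine_for ::
  "nat \<Rightarrow> (nat \<Rightarrow> nat) \<Rightarrow> (nat \<Rightarrow> nat) \<Rightarrow> (nat \<Rightarrow> nat) \<Rightarrow> real \<Rightarrow> (nat \<Rightarrow> real) \<Rightarrow> bool" where
  "pseudo_cosine_for D a b c \<theta> s \<longleftrightarrow> s 0 = 1 \<and>
     (\<forall>i<D. (if i = 0 then 0 else real (c i) * s (i - 1)) + real (a i) * s i
             + real (b i) * s (i + 1) = \<theta> * s i)"

definition pseudo_cosine ::
  "nat \<Rightarrow> (nat \<Rightarrow> nat) \<Rightarrow> (nat \<Rightarrow> nat) \<Rightarrow> (nat \<Rightarrow> nat) \<Rightarrow> (nat \<Rightarrow> real) \<Rightarrow> bool" where
  "pseudo_cosine D a b c s \<longleftrightarrow> (\<exists>\<theta>. pseudo_cosine_for D a b c \<theta> s)"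

definition nontrivial_pcs ::
  "nat \<Rightarrow> (nat \<Rightarrow> nat) \<Rightarrow> (nat \<Rightarrow> nat) \<Rightarrow> (nat \<Rightarrow> nat) \<Rightarrow> (nat \<Rightarrow> real) \<Rightarrow> bool" where
  "nontrivial_pcs D a b c s \<longleftrightarrow> pseudo_cosine D a b c s \<and> s 1 \<noteq> 1"

definition tight_pair ::
  "nat \<Rightarrow> (nat \<Rightarrow> nat) \<Rightarrow> (nat \<Rightarrow> nat) \<Rightarrow> (nat \<Rightarrow> nat) \<Rightarrow> (nat \<Rightarrow> real) \<Rightarrow> (nat \<Rightarrow> real) \<Rightarrow> bool" where
  "tight_pair D a b c s r \<longleftrightarrow> pseudo_cosine D a b c s \<and> pseudo_cosine D a b c r \<and>
     pseudo_cosine D a b c (\<lambda>i. s i * r i)"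

definition aux_param_pair :: "nat \<Rightarrow> (nat \<Rightarrow> real) \<Rightarrow> (nat \<Rightarrow> real) \<Rightarrow> real \<Rightarrow> bool" where
  "aux_param_pair D s r e \<longleftrightarrow>
     (\<forall>i\<in>{1..D}. s i * r i - s (i - 1) * r (i - 1) = e * (s (i - 1) * r i - s i * r (i - 1)))"

definition tight_pcs ::
  "nat \<Rightarrow> (nat \<Rightarrow> nat) \<Rightarrow> (nat \<Rightarrow> nat) \<Rightarrow> (nat \<Rightarrow> nat) \<Rightarrow> (nat \<Rightarrow> real) \<Rightarrow> bool" where
  "tight_pcs D a b c s \<longleftrightarrow> nontrivial_pcs D a b c s \<and>
     (\<exists>r. nontrivial_pcs D a b c r \<and> tight_pair D a b c s r)"

definition aux_param ::
  "nat \<Rightarrow> (nat \<Rightarrow> nat) \<Rightarrow> (nat \<Rightarrow> nat) \<Rightarrow> (nat \<Rightarrow> nat) \<Rightarrow> (nat \<Rightarrow> real) \<Rightarrow> real \<Rightarrow> bool" where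
  "aux_param D a b c s e \<longleftrightarrow> nontrivial_pcs D a b c s \<and>
     (\<exists>r. nontrivial_pcs D a b c r \<and> tight_pair D a b c s r \<and> aux_param_pair D s r e)"

definition feasible_pcs ::
  "nat \<Rightarrow> (nat \<Rightarrow> nat) \<Rightarrow> (nat \<Rightarrow> nat) \<Rightarrow> (nat \<Rightarrow> nat) \<Rightarrow> (nat \<Rightarrow> real) \<Rightarrow> bool" where
  "feasible_pcs D a b c s \<longleftrightarrow> pseudo_cosine D a b c s \<and> tight_pcs D a b c s \<and>
     (\<forall>i\<in>{1..D-1}. s (i - 1) \<noteq> s (i + 1))"

end

theory Submission
  imports Defs
begin

lemma gd_reach:
  assumes "connected_graph V E" "x \<in> V" "y \<in> V"
  shows "(x, y) \<in> adjrel V E ^^ gdist V E x y"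
  using assms unfolding gdist_def connected_graph_def by (metis LeastI_ex)

lemma gd_le: "(x, y) \<in> adjrel V E ^^ n \<Longrightarrow> gdist V E x y \<le> n"
  unfolding gdist_def by (rule Least_le)

lemma gd_self: "gdist V E x x = 0"
  using gd_le[where x=x and y=x and V=V and E=E and n=0] by simp

lemma gd_zero:
  assumes "connected_graph V E" "x \<in> V" "y \<in> V" "gdist V E x y = 0"
  shows "x = y"
  using gd_reach[OF assms(1-3)] assms(4) by simp

lemma gd_step:
  assumes "connected_graph V E" "x \<in> V" "y \<in> V" "z \<in> V" "E y z"
  shows "gdist V E x z \<le> gdist V E x y + 1"
proof -
  have "(x, z) \<in> adjrel V E ^^ Suc (gdist V E x y)"
    by (rule relpow_Suc_I[OF gd_reach[OF assms(1-3)]]) (use assms in \<open>simp add: adjrel_def\<close>)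
  then show ?thesis using gd_le by fastforce
qed

lemma gd_step2:
  assumes "simple_graph V E" "connected_graph V E" "x \<in> V" "y \<in> V" "z \<in> V" "E y z"
  shows "gdist V E x y \<le> gdist V E x z + 1"
proof -
  have "E z y" using assms(1,4,5,6) unfolding simple_graph_def by blast
  then show ?thesis using gd_step[OF assms(2,3,5,4)] by blast
qed

lemma gd_adj:
  assumes "simple_graph V E" "connected_graph V E" "x \<in> V" "z \<in> V" "E x z"
  shows "gdist V E x z = 1"
proof -
  have "(x, z) \<in> adjrel V E ^^ 1" using assms by (simp add: adjrel_def)
  then have "gdist V E x z \<le> 1" by (rule gd_le)
  moreover have "gdist V E x z \<noteq> 0"
  proof
    assume "gdist V E x z = 0"
    then have "x = z" using gd_zero assms by metis
    then show False using assms unfolding simple_graph_def by blast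
  qed
  ultimately show ?thesis by simp
qed

lemma gd_pred:
  assumes "simple_graph V E" "connected_graph V E" "x \<in> V" "y \<in> V" "gdist V E x y = Suc m"
  shows "\<exists>w\<in>V. E w y \<and> gdist V E x w = m"
proof -
  have "(x, y) \<in> adjrel V E ^^ Suc m" using gd_reach[OF assms(2-4)] assms(5) by simp
  then obtain w where w1: "(x, w) \<in> adjrel V E ^^ m" and w2: "(w, y) \<in> adjrel V E"
    by (blast elim: relpow_Suc_E)
  have wV: "w \<in> V" "E w y" using w2 by (auto simp: adjrel_def)
  have "gdist V E x w \<le> m" using gd_le[OF w1] .
  moreover have "gdist V E x y \<le> gdist V E x w + 1" using gd_step[OF assms(2,3) wV(1) assms(4) wV(2)] .
  ultimately show ?thesis using wV assms(5) by auto
qed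

lemma gd_chain:
  assumes "simple_graph V E" "connected_graph V E" "x \<in> V"
  shows "\<forall>y\<in>V. gdist V E x y = n \<longrightarrow> (\<forall>j<n. \<exists>v\<in>V. \<exists>u\<in>V. E v u \<and> gdist V E x v = j \<and> gdist V E x u = Suc j)"
proof (induction n)
  case 0
  then show ?case by simp
next
  case (Suc m)
  show ?case
  proof (intro ballI impI allI)
    fix y j assume yV: "y \<in> V" and d: "gdist V E x y = Suc m" and j: "j < Suc m"
    obtain w where w: "w \<in> V" "E w y" "gdist V E x w = m" using gd_pred[OF assms yV d] by blast
    show "\<exists>v\<in>V. \<exists>u\<in>V. E v u \<and> gdist V E x v = j \<and> gdist V E x u = Suc j"
    proof (cases "j = m")
      case True then show ?thesis using w yV d by blast
    next
      case False then have "j < m" using j by simp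
      then show ?thesis using Suc.IH w by blast
    qed
  qed
qed

lemma drg_exists_D:
  assumes "distance_regular V E D a b c"
  shows "\<exists>x\<in>V. \<exists>y\<in>V. gdist V E x y = D"
proof -
  have sg: "simple_graph V E" and dm: "diameter V E = D" using assms by (auto simp: distance_regular_def)
  let ?S = "{gdist V E x y | x y. x \<in> V \<and> y \<in> V}"
  have "?S = (\<lambda>(x,y). gdist V E x y) ` (V \<times> V)" by auto
  moreover have "finite (V \<times> V)" using sg by (simp add: simple_graph_def)
  ultimately have fin: "finite ?S" by simp
  obtain x where "x \<in> V" using sg by (auto simp: simple_graph_def)
  then have ne: "?S \<noteq> {}" by blast
  have "Max ?S \<in> ?S" using Max_in[OF fin ne] .
  then obtain x y where "x \<in> V" "y \<in> V" "Max ?S = gdist V E x y" by blast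
  moreover have "Max ?S = D" using dm by (simp add: diameter_def)
  ultimately show ?thesis by metis
qed

lemma drg_facts:
  assumes dr: "distance_regular V E D a b c" and D1: "D \<ge> 1"
  shows "a 0 = 0" "c 1 = 1" "\<And>i. 1 \<le> i \<Longrightarrow> i < D \<Longrightarrow> c i + a i + b i = b 0"
    "\<And>i. i < D \<Longrightarrow> b i > 0" "\<And>i. 1 \<le> i \<Longrightarrow> i < D \<Longrightarrow> c i > 0"
proof -
  have sg: "simple_graph V E" and cg: "connected_graph V E"
    and cnt: "\<And>x y. x \<in> V \<Longrightarrow> y \<in> V \<Longrightarrow>
        card {z \<in> V. E y z \<and> gdist V E x z + 1 = gdist V E x y} = c (gdist V E x y) \<and>
        card {z \<in> V. E y z \<and> gdist V E x z = gdist V E x y} = a (gdist V E x y) \<and>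
        card {z \<in> V. E y z \<and> gdist V E x z = gdist V E x y + 1} = b (gdist V E x y)"
    using dr unfolding distance_regular_def by blast+
  have finV: "finite V" using sg by (simp add: simple_graph_def)
  obtain x0 y0 where x0: "x0 \<in> V" "y0 \<in> V" "gdist V E x0 y0 = D" using drg_exists_D[OF dr] by blast
  have chain: "\<And>j. j < D \<Longrightarrow> \<exists>v\<in>V. \<exists>u\<in>V. E v u \<and> gdist V E x0 v = j \<and> gdist V E x0 u = Suc j"
    using gd_chain[OF sg cg x0(1), of D] x0 by blast
  show "a 0 = 0"
  proof -
    have "{z \<in> V. E x0 z \<and> gdist V E x0 z = 0} = {}"
      using gd_zero[OF cg x0(1)] sg unfolding simple_graph_def by auto
    moreover have "card {z \<in> V. E x0 z \<and> gdist V E x0 z = 0} = a 0"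
      using cnt[OF x0(1) x0(1)] gd_self[of V E x0] by simp
    ultimately show ?thesis by (metis card.empty)
  qed
  show "c 1 = 1"
  proof -
    obtain v u where vu: "v \<in> V" "u \<in> V" "E v u" "gdist V E x0 v = 0" "gdist V E x0 u = 1"
      using chain[of 0] D1 by auto
    have vx: "v = x0" using gd_zero[OF cg x0(1) vu(1) vu(4)] by simp
    have "{z \<in> V. E u z \<and> gdist V E x0 z + 1 = gdist V E x0 u} = {x0}"
    proof -
      have "E u x0" using sg vu vx unfolding simple_graph_def by blast
      then show ?thesis using vu gd_zero[OF cg x0(1)] x0 gd_self[of V E x0] by auto
    qed
    then show ?thesis using cnt[OF x0(1) vu(2)] vu(5) by simp
  qed
  show "b i > 0" if iD: "i < D" for i
  proof -
    obtain v u where vu: "v \<in> V" "u \<in> V" "E v u" "gdist V E x0 v = i" "gdist V E x0 u = Suc i"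
      using chain[OF iD] by auto
    have "u \<in> {z \<in> V. E v z \<and> gdist V E x0 z = gdist V E x0 v + 1}" using vu by simp
    moreover have "finite {z \<in> V. E v z \<and> gdist V E x0 z = gdist V E x0 v + 1}" using finV by simp
    ultimately have "card {z \<in> V. E v z \<and> gdist V E x0 z = gdist V E x0 v + 1} > 0"
      using card_gt_0_iff by blast
    then show ?thesis using cnt[OF x0(1) vu(1)] vu(4) by simp
  qed
  show "c i > 0" if iD: "1 \<le> i" "i < D" for i
  proof -
    obtain v u where vu: "v \<in> V" "u \<in> V" "E v u" "gdist V E x0 v = i" "gdist V E x0 u = Suc i"
      using chain[OF iD(2)] by auto
    obtain m where m: "i = Suc m" using iD(1) by (cases i) auto
    obtain w where w: "w \<in> V" "E w v" "gdist V E x0 w = m" using gd_pred[OF sg cg x0(1) vu(1)] vu(4) m by blast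
    have ew: "E v w" using sg w vu unfolding simple_graph_def by blast
    have "w \<in> {z \<in> V. E v z \<and> gdist V E x0 z + 1 = gdist V E x0 v}" using w ew vu m by simp
    moreover have "finite {z \<in> V. E v z \<and> gdist V E x0 z + 1 = gdist V E x0 v}" using finV by simp
    ultimately have "card {z \<in> V. E v z \<and> gdist V E x0 z + 1 = gdist V E x0 v} > 0"
      using card_gt_0_iff by blast
    then show ?thesis using cnt[OF x0(1) vu(1)] vu(4) by simp
  qed
  show "c i + a i + b i = b 0" if iD: "1 \<le> i" "i < D" for i
  proof -
    obtain v u where vu: "v \<in> V" "u \<in> V" "E v u" "gdist V E x0 v = i" "gdist V E x0 u = Suc i"
      using chain[OF iD(2)] by auto
    let ?N = "{z \<in> V. E v z}"
    let ?Sc = "{z \<in> V. E v z \<and> gdist V E x0 z + 1 = gdist V E x0 v}"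
    let ?Sa = "{z \<in> V. E v z \<and> gdist V E x0 z = gdist V E x0 v}"
    let ?Sb = "{z \<in> V. E v z \<and> gdist V E x0 z = gdist V E x0 v + 1}"
    have deg: "b 0 = card ?N"
    proof -
      have "{z \<in> V. E v z \<and> gdist V E v z = gdist V E v v + 1} = ?N"
        using gd_adj[OF sg cg vu(1)] gd_self[of V E v] by auto
      then show ?thesis using cnt[OF vu(1) vu(1)] gd_self[of V E v] by simp
    qed
    have "?N = ?Sc \<union> ?Sa \<union> ?Sb"
    proof
      show "?N \<subseteq> ?Sc \<union> ?Sa \<union> ?Sb"
      proof
        fix z assume z: "z \<in> ?N"
        have "gdist V E x0 z \<le> gdist V E x0 v + 1" using gd_step[OF cg x0(1) vu(1)] z by blast
        moreover have "gdist V E x0 v \<le> gdist V E x0 z + 1" using gd_step2[OF sg cg x0(1) vu(1)] z by blast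
        ultimately show "z \<in> ?Sc \<union> ?Sa \<union> ?Sb" using z by auto
      qed
    qed auto
    moreover have "?Sc \<inter> ?Sa = {}" "(?Sc \<union> ?Sa) \<inter> ?Sb = {}" by auto
    moreover have "finite ?Sc" "finite ?Sa" "finite ?Sb" using finV by simp_all
    ultimately have "card ?N = card ?Sc + card ?Sa + card ?Sb"
      by (simp add: card_Un_disjoint)
    then show ?thesis using deg cnt[OF x0(1) vu(1)] vu(4) by simp
  qed
qed

lemma pcs_rec:
  assumes p: "pseudo_cosine_for D a b c \<theta> f" and a0: "a 0 = 0" and D0: "0 < D"
    and cab: "\<And>i. 1 \<le> i \<Longrightarrow> i < D \<Longrightarrow> c i + a i + b i = b 0"
  shows "f 0 = 1" "\<theta> = real (b 0) * f 1"
    "\<And>i. 1 \<le> i \<Longrightarrow> i < D \<Longrightarrow> real (c i) * (f (i-1) - f i) + real (b i) * (f (i+1) - f i)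
        = real (b 0) * (f 1 - 1) * f i"
proof -
  have f0: "f 0 = 1" and r: "\<And>i. i < D \<Longrightarrow> (if i = 0 then 0 else real (c i) * f (i - 1)) + real (a i) * f i
             + real (b i) * f (i + 1) = \<theta> * f i"
    using p unfolding pseudo_cosine_for_def by auto
  show "f 0 = 1" by (fact f0)
  have th: "\<theta> = real (b 0) * f 1" using r[OF D0] a0 f0 by simp
  show "\<theta> = real (b 0) * f 1" by (fact th)
  fix i assume i: "1 \<le> i" "i < D"
  have "real (c i + a i + b i) = real (b 0)"
    using cab[OF i] by simp
  then have ai: "real (a i) = real (b 0) - real (b i) - real (c i)" by simp
  have "real (c i) * f (i - 1) + real (a i) * f i + real (b i) * f (i + 1) = \<theta> * f i"
    using r[OF i(2)] i by simp
  then have "real (c i) * f (i - 1) + (real (b 0) - real (b i) - real (c i)) * f i + real (b i) * f (i + 1)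
     = real (b 0) * f 1 * f i" unfolding ai th .
  then show "real (c i) * (f (i-1) - f i) + real (b i) * (f (i+1) - f i)
        = real (b 0) * (f 1 - 1) * f i" by (simp add: algebra_simps)
qed

lemma back_zero:
  assumes rc: "\<And>i. 1 \<le> i \<Longrightarrow> i < D \<Longrightarrow> real (c i) * (f (i-1) - f i) + real (b i) * (f (i+1) - f i) = K * f i"
    and cpos: "\<And>i. 1 \<le> i \<Longrightarrow> i < D \<Longrightarrow> c i > 0"
  shows "n < D \<Longrightarrow> f n = 0 \<Longrightarrow> f (Suc n) = 0 \<Longrightarrow> f 0 = 0"
proof (induction n)
  case 0 then show ?case by simp
next
  case (Suc m)
  have "real (c (Suc m)) * (f m - 0) + real (b (Suc m)) * (0 - 0) = K * 0"
    using rc[of "Suc m"] Suc.prems by simp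
  then have "f m = 0" using cpos[of "Suc m"] Suc.prems by simp
  then show ?case using Suc by simp
qed

lemma local_id:
  fixes k C B x y z p q r \<sigma> \<rho> \<epsilon> :: real
  assumes E1: "C * (x - y) + B * (z - y) = k * (\<sigma> - 1) * y"
    and E2: "C * (p - q) + B * (r - q) = k * (\<rho> - 1) * q"
    and A1: "y * q - x * p = \<epsilon> * (x * q - y * p)"
    and A2: "z * r - y * q = \<epsilon> * (y * r - z * q)"
    and A0: "\<sigma> * \<rho> - 1 = \<epsilon> * (\<rho> - \<sigma>)"
    and q: "q \<noteq> 0" and ep: "\<epsilon> \<noteq> -1"
  shows "(\<sigma> - \<epsilon>) * C * (x - y) * (z - x) = k * (\<sigma> - 1) * (x - \<epsilon> * y) * (z - \<sigma> * y)"
    "(\<sigma> - \<epsilon>) * B * (z - y) * (x - z) = k * (\<sigma> - 1) * (z - \<epsilon> * y) * (x - \<sigma> * y)"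
proof -
  have "(p - q) * (x - \<epsilon> * y) - q * (1 + \<epsilon>) * (y - x) = -((y * q - x * p) - \<epsilon> * (x * q - y * p))"
    by algebra
  then have P: "(p - q) * (x - \<epsilon> * y) = q * (1 + \<epsilon>) * (y - x)" using A1 by simp
  have "(r - q) * (z - \<epsilon> * y) - q * (1 + \<epsilon>) * (y - z) = (z * r - y * q) - \<epsilon> * (y * r - z * q)"
    by algebra
  then have R: "(r - q) * (z - \<epsilon> * y) = q * (1 + \<epsilon>) * (y - z)" using A2 by simp
  have "(\<rho> - 1) * (\<sigma> - \<epsilon>) - (1 + \<epsilon>) * (1 - \<sigma>) = (\<sigma> * \<rho> - 1) - \<epsilon> * (\<rho> - \<sigma>)"
    by algebra
  then have S: "(\<rho> - 1) * (\<sigma> - \<epsilon>) = (1 + \<epsilon>) * (1 - \<sigma>)" using A0 by simp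
  have "q * (1 + \<epsilon>) * ((\<sigma> - \<epsilon>) * (C * (y - x) * (z - \<epsilon> * y) + B * (y - z) * (x - \<epsilon> * y)))
       = q * (1 + \<epsilon>) * (k * (1 - \<sigma>) * (x - \<epsilon> * y) * (z - \<epsilon> * y))"
  proof -
    have "q * (1 + \<epsilon>) * ((\<sigma> - \<epsilon>) * (C * (y - x) * (z - \<epsilon> * y) + B * (y - z) * (x - \<epsilon> * y)))
        = (\<sigma> - \<epsilon>) * (C * ((p - q) * (x - \<epsilon> * y)) * (z - \<epsilon> * y) + B * ((r - q) * (z - \<epsilon> * y)) * (x - \<epsilon> * y))"
      unfolding P R by algebra
    also have "\<dots> = (\<sigma> - \<epsilon>) * (x - \<epsilon> * y) * (z - \<epsilon> * y) * (C * (p - q) + B * (r - q))"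
      by algebra
    also have "\<dots> = (x - \<epsilon> * y) * (z - \<epsilon> * y) * k * q * ((\<rho> - 1) * (\<sigma> - \<epsilon>))"
      unfolding E2 by algebra
    also have "\<dots> = q * (1 + \<epsilon>) * (k * (1 - \<sigma>) * (x - \<epsilon> * y) * (z - \<epsilon> * y))"
      unfolding S by algebra
    finally show ?thesis .
  qed
  moreover have "q * (1 + \<epsilon>) \<noteq> 0" using q ep by (simp add: add_eq_0_iff)
  ultimately have E2': "(\<sigma> - \<epsilon>) * (C * (y - x) * (z - \<epsilon> * y) + B * (y - z) * (x - \<epsilon> * y))
       = k * (1 - \<sigma>) * (x - \<epsilon> * y) * (z - \<epsilon> * y)" by simp
  have "(\<sigma> - \<epsilon>) * C * (x - y) * (z - x) - k * (\<sigma> - 1) * (x - \<epsilon> * y) * (z - \<sigma> * y)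
    = - ((\<sigma> - \<epsilon>) * (C * (y - x) * (z - \<epsilon> * y) + B * (y - z) * (x - \<epsilon> * y))
       - k * (1 - \<sigma>) * (x - \<epsilon> * y) * (z - \<epsilon> * y))
      - (\<sigma> - \<epsilon>) * (x - \<epsilon> * y) * ((C * (x - y) + B * (z - y)) - k * (\<sigma> - 1) * y)"
    by algebra
  then show "(\<sigma> - \<epsilon>) * C * (x - y) * (z - x) = k * (\<sigma> - 1) * (x - \<epsilon> * y) * (z - \<sigma> * y)"
    using E1 E2' by simp
  have "(\<sigma> - \<epsilon>) * B * (z - y) * (x - z) - k * (\<sigma> - 1) * (z - \<epsilon> * y) * (x - \<sigma> * y)
    = - ((\<sigma> - \<epsilon>) * (C * (y - x) * (z - \<epsilon> * y) + B * (y - z) * (x - \<epsilon> * y))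
       - k * (1 - \<sigma>) * (x - \<epsilon> * y) * (z - \<epsilon> * y))
      - (\<sigma> - \<epsilon>) * (z - \<epsilon> * y) * ((C * (x - y) + B * (z - y)) - k * (\<sigma> - 1) * y)"
    by algebra
  then show "(\<sigma> - \<epsilon>) * B * (z - y) * (x - z) = k * (\<sigma> - 1) * (z - \<epsilon> * y) * (x - \<sigma> * y)"
    using E1 E2' by simp
qed

lemma alg_s:
  fixes h x y z \<sigma> \<epsilon> C B :: real
  assumes H1: "C*((z-x)*(x-y)) = h*((z-\<sigma>*y)*(x-\<epsilon>*y))" and H2: "B*((x-z)*(z-y)) = h*((x-\<sigma>*y)*(z-\<epsilon>*y))"
    and "x \<noteq> z"
  shows "C*(x-y) + B*(z-y) = h*(\<sigma>-\<epsilon>)*y"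
proof -
  have "(z-x)*(C*(x-y) + B*(z-y) - h*(\<sigma>-\<epsilon>)*y)
     = (C*((z-x)*(x-y)) - h*((z-\<sigma>*y)*(x-\<epsilon>*y))) - (B*((x-z)*(z-y)) - h*((x-\<sigma>*y)*(z-\<epsilon>*y)))"
    by algebra
  then have "(z-x)*(C*(x-y) + B*(z-y) - h*(\<sigma>-\<epsilon>)*y) = 0" using H1 H2 by simp
  then show ?thesis using assms(3) by simp
qed

lemma alg_r:
  fixes h x y z \<sigma> \<epsilon> p q r C B :: real
  assumes H1: "C*((z-x)*(x-y)) = h*((z-\<sigma>*y)*(x-\<epsilon>*y))" and H2: "B*((x-z)*(z-y)) = h*((x-\<sigma>*y)*(z-\<epsilon>*y))"
    and H3: "q*(y-\<epsilon>*x) = p*(x-\<epsilon>*y)" and H4: "r*(z-\<epsilon>*y) = q*(y-\<epsilon>*z)"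
    and "x \<noteq> z" "y - \<epsilon>*x \<noteq> 0" "z - \<epsilon>*y \<noteq> 0"
  shows "C*(p - q) + B*(r - q) = - h*(1+\<epsilon>)*q"
proof -
  have "((z-x)*(y-\<epsilon>*x)*(z-\<epsilon>*y)) * (C*(p - q) + B*(r - q) + h*(1+\<epsilon>)*q) = 0"
    using H1 H2 H3 H4 by algebra
  then show ?thesis using assms(5-7) by simp
qed

lemma alg_p:
  fixes h x y z \<sigma> \<epsilon> p q r C B :: real
  assumes H1: "C*((z-x)*(x-y)) = h*((z-\<sigma>*y)*(x-\<epsilon>*y))" and H2: "B*((x-z)*(z-y)) = h*((x-\<sigma>*y)*(z-\<epsilon>*y))"
    and H3: "q*(y-\<epsilon>*x) = p*(x-\<epsilon>*y)" and H4: "r*(z-\<epsilon>*y) = q*(y-\<epsilon>*z)"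
    and "x \<noteq> z" "y - \<epsilon>*x \<noteq> 0" "z - \<epsilon>*y \<noteq> 0"
  shows "C*(x*p - y*q) + B*(z*r - y*q) = - h*\<epsilon>*(1+\<sigma>)*(y*q)"
proof -
  have "((z-x)*(y-\<epsilon>*x)*(z-\<epsilon>*y)) * (C*(x*p - y*q) + B*(z*r - y*q) + h*\<epsilon>*(1+\<sigma>)*(y*q)) = 0"
    using H1 H2 H3 H4 by algebra
  then show ?thesis using assms(5-7) by simp
qed

lemma solve_div:
  fixes P Dn K X h \<sigma> \<epsilon> :: real
  assumes "(\<sigma> - \<epsilon>) * P * Dn = K * X" "Dn \<noteq> 0" "\<sigma> - \<epsilon> \<noteq> 0" "h = K / (\<sigma> - \<epsilon>)"
  shows "P = h * X / Dn"
proof -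
  have K: "K = h*(\<sigma>-\<epsilon>)" using assms(3,4) by simp
  have "(\<sigma>-\<epsilon>)*(P*Dn - h*X) = (\<sigma>-\<epsilon>)*P*Dn - K*X" unfolding K by (simp add: algebra_simps)
  then have "(\<sigma>-\<epsilon>)*(P*Dn - h*X) = 0" using assms(1) by simp
  then have "P*Dn = h*X" using assms(3) by simp
  then show ?thesis using assms(2) by (simp add: eq_divide_eq)
qed

lemma fwd:
  fixes a b c :: "nat \<Rightarrow> nat" and s :: "nat \<Rightarrow> real" and e h :: real and D :: nat
  assumes D3: "D \<ge> 3" and a0: "a 0 = 0" and c1: "c 1 = 1"
    and cab: "\<And>i. 1 \<le> i \<Longrightarrow> i < D \<Longrightarrow> c i + a i + b i = b 0"
    and bpos: "\<And>i. i < D \<Longrightarrow> b i > 0" and cpos: "\<And>i. 1 \<le> i \<Longrightarrow> i < D \<Longrightarrow> c i > 0"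
    and a1: "a 1 \<noteq> 0" and fe: "feasible_pcs D a b c s" and ap: "aux_param D a b c s e"
    and hdef: "h = (1 - s 1) * (1 - s 2) / ((s 1 ^ 2 - s 2) * (1 - e * s 1))"
  shows "s 0 = 1 \<and> e \<noteq> 1 \<and> e \<noteq> -1 \<and>
          real (b 0) = h * (s 1 - e) / (s 1 - 1) \<and>
          (\<forall>i\<in>{1..D-1}.
             real (b i) = h * ((s (i - 1) - s 1 * s i) * (s (i + 1) - e * s i))
                            / ((s (i - 1) - s (i + 1)) * (s (i + 1) - s i)) \<and>
             real (c i) = h * ((s (i + 1) - s 1 * s i) * (s (i - 1) - e * s i))
                            / ((s (i + 1) - s (i - 1)) * (s (i - 1) - s i))) \<and>
          s 1 - 1 \<noteq> 0 \<and>
          (\<forall>i\<in>{1..D-1}. s (i - 1) - s (i + 1) \<noteq> 0 \<and> s (i + 1) - s i \<noteq> 0 \<and>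
                          s (i + 1) - s (i - 1) \<noteq> 0 \<and> s (i - 1) - s i \<noteq> 0)"
proof -
  have D0: "0 < D" using D3 by simp
  from ap obtain r where nr: "nontrivial_pcs D a b c r" and tp: "tight_pair D a b c s r"
      and app: "aux_param_pair D s r e" unfolding aux_param_def by blast
  obtain \<theta>1 where ps: "pseudo_cosine_for D a b c \<theta>1 s"
    using fe unfolding feasible_pcs_def pseudo_cosine_def by blast
  obtain \<theta>2 where pr: "pseudo_cosine_for D a b c \<theta>2 r"
    using nr unfolding nontrivial_pcs_def pseudo_cosine_def by blast
  have r1: "r 1 \<noteq> 1" using nr unfolding nontrivial_pcs_def by blast
  have s1: "s 1 \<noteq> 1" using fe unfolding feasible_pcs_def tight_pcs_def nontrivial_pcs_def by blast
  have feas: "s (i-1) \<noteq> s (i+1)" if "1 \<le> i" "i < D" for i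
    using fe that unfolding feasible_pcs_def by auto
  define k where "k = real (b 0)"
  have s0: "s 0 = 1" using pcs_rec[OF ps a0 D0 cab] by simp
  have RS: "real (c i) * (s (i-1) - s i) + real (b i) * (s (i+1) - s i) = k * (s 1 - 1) * s i"
    if "1 \<le> i" "i < D" for i using pcs_rec(3)[OF ps a0 D0 cab that] unfolding k_def .
  have r0: "r 0 = 1" using pcs_rec[OF pr a0 D0 cab] by simp
  have RR: "real (c i) * (r (i-1) - r i) + real (b i) * (r (i+1) - r i) = k * (r 1 - 1) * r i"
    if "1 \<le> i" "i < D" for i using pcs_rec(3)[OF pr a0 D0 cab that] unfolding k_def .
  have AUX: "s i * r i - s (i-1) * r (i-1) = e * (s (i-1) * r i - s i * r (i-1))"
    if "1 \<le> i" "i \<le> D" for i using app that unfolding aux_param_pair_def by auto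
  have kpos: "k > 0" using bpos[OF D0] k_def by simp
  have Cpos: "real (c i) > 0" if "1 \<le> i" "i < D" for i using cpos[OF that] by simp
  have Bpos: "real (b i) > 0" if "i < D" for i using bpos[OF that] by simp
  have kABC: "k = real (c i) + real (a i) + real (b i)" if "1 \<le> i" "i < D" for i
  proof -
    have "real (c i + a i + b i) = k" using cab[OF that] k_def by simp
    then show ?thesis by simp
  qed
  have A1': "s 1 * r 1 - 1 = e * (r 1 - s 1)" using AUX[of 1] s0 r0 D3 by simp
  have A2': "s 2 * r 2 - s 1 * r 1 = e * (s 1 * r 2 - s 2 * r 1)" using AUX[of 2] D3 by simp
  have A3': "s 3 * r 3 - s 2 * r 2 = e * (s 2 * r 3 - s 3 * r 2)" using AUX[of 3] D3 by simp
  have RS1: "(1 - s 1) + real (b 1) * (s 2 - s 1) = k * (s 1 - 1) * s 1"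
    using RS[of 1] D3 s0 c1 by (simp add: numeral_2_eq_2)
  have RR1: "(1 - r 1) + real (b 1) * (r 2 - r 1) = k * (r 1 - 1) * r 1"
    using RR[of 1] D3 r0 c1 by (simp add: numeral_2_eq_2)
  have RS2: "real (c 2) * (s 1 - s 2) + real (b 2) * (s 3 - s 2) = k * (s 1 - 1) * s 2"
    using RS[of 2] D3 by simp
  have RR2: "real (c 2) * (r 1 - r 2) + real (b 2) * (r 3 - r 2) = k * (r 1 - 1) * r 2"
    using RR[of 2] D3 by simp
  have k1: "k = 1 + real (a 1) + real (b 1)" using kABC[of 1] D3 c1 by simp
  have k2: "k = real (c 2) + real (a 2) + real (b 2)" using kABC[of 2] D3 by simp
  have a1pos: "real (a 1) > 0" using a1 by simp
  have B1: "real (b 1) > 0" using Bpos[of 1] D3 by simp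
  have B2: "real (b 2) > 0" using Bpos[of 2] D3 by simp
  have C2: "real (c 2) > 0" using Cpos[of 2] D3 by simp
  have A2: "real (a 2) \<ge> 0" by simp
  have s2ne: "s 2 \<noteq> 1" using feas[of 1] D3 s0 by (simp add: numeral_2_eq_2)
  have em1: "e \<noteq> -1"
  proof
    assume e: "e = -1"
    have "(s 1 + 1) * (r 1 - 1) = 0" using A1' e by algebra
    then have sg: "s 1 = -1" using r1 by simp
    have "(s 2 + s 1) * (r 2 - r 1) = 0" using A2' e by algebra
    moreover have "s 2 + s 1 \<noteq> 0" using s2ne sg by simp
    ultimately have r21: "r 2 = r 1" by simp
    have "real (b 1) * (s 2 - 1) = 2 * real (a 1)" using RS1 k1 sg by algebra
    then have "real (b 1) * (s 2 - 1) > 0" using a1pos by simp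
    then have s2gt: "s 2 > 1" using B1 by (simp add: zero_less_mult_iff)
    have "(1 - r 1) * (1 + k * r 1) = 0" using RR1 r21 by algebra
    then have kr: "k * r 1 = -1" using r1 by simp
    have "real (b 2) * (r 3 - r 1) = 1 - r 1" using RR2 r21 kr by algebra
    then have "r 3 \<noteq> r 2" using r1 r21 by auto
    moreover have "(s 3 + s 2) * (r 3 - r 2) = 0" using A3' e by algebra
    ultimately have s3: "s 3 = - s 2" by simp
    have "real (c 2) * (s 2 - 1) + 2 * real (a 2) * s 2 = 0" using RS2 k2 sg s3 by algebra
    moreover have "real (c 2) * (s 2 - 1) > 0" using C2 s2gt by simp
    moreover have "2 * real (a 2) * s 2 \<ge> 0" using A2 s2gt by simp
    ultimately show False by linarith
  qed
  have e1: "e \<noteq> 1"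
  proof
    assume e: "e = 1"
    have "(s 1 - 1) * (r 1 + 1) = 0" using A1' e by algebra
    then have rg: "r 1 = -1" using s1 by simp
    have "(s 2 - s 1) * (r 2 + r 1) = 0" using A2' e by algebra
    have "real (b 1) * (r 2 - 1) = 2 * real (a 1)" using RR1 k1 rg by algebra
    then have "real (b 1) * (r 2 - 1) > 0" using a1pos by simp
    then have r2gt: "r 2 > 1" using B1 by (simp add: zero_less_mult_iff)
    then have "r 2 + r 1 \<noteq> 0" using rg by simp
    with \<open>(s 2 - s 1) * (r 2 + r 1) = 0\<close> have s21: "s 2 = s 1" by simp
    have "(1 - s 1) * (1 + k * s 1) = 0" using RS1 s21 by algebra
    then have ks: "k * s 1 = -1" using s1 by simp
    have "real (b 2) * (s 3 - s 1) = 1 - s 1" using RS2 s21 ks by algebra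
    then have "s 3 \<noteq> s 2" using s1 s21 by auto
    moreover have "(s 3 - s 2) * (r 3 + r 2) = 0" using A3' e by algebra
    ultimately have r3: "r 3 = - r 2" by simp
    have "real (c 2) * (r 2 - 1) + 2 * real (a 2) * r 2 = 0" using RR2 k2 rg r3 by algebra
    moreover have "real (c 2) * (r 2 - 1) > 0" using C2 r2gt by simp
    moreover have "2 * real (a 2) * r 2 \<ge> 0" using A2 r2gt by simp
    ultimately show False by linarith
  qed
  have se: "s 1 - e \<noteq> 0"
  proof
    assume "s 1 - e = 0"
    then have "(s 1 - 1) * (s 1 + 1) = 0" using A1' by algebra
    then have "s 1 = -1" using s1 by simp
    then show False using em1 \<open>s 1 - e = 0\<close> by simp
  qed
  have rnz: "r i \<noteq> 0" if i: "1 \<le> i" "i < D" for i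
  proof
    assume ri: "r i = 0"
    have rp: "r (i-1) \<noteq> 0"
    proof
      assume "r (i-1) = 0"
      moreover have "r (Suc (i-1)) = 0" using ri i by simp
      ultimately have "r 0 = 0" using back_zero[of D c r b "k * (r 1 - 1)" "i-1", OF RR cpos] i by simp
      then show False using r0 by simp
    qed
    have "s i * r i - s (i-1) * r (i-1) = e * (s (i-1) * r i - s i * r (i-1))" using AUX[of i] i by simp
    then have "r (i-1) * (s (i-1) - e * s i) = 0" using ri by algebra
    then have x: "s (i-1) = e * s i" using rp by simp
    have "real (c i) * r (i-1) + real (b i) * r (i+1) = 0" using RR[OF i] ri by simp
    moreover have "real (c i) * r (i-1) \<noteq> 0" using rp Cpos[OF i] by simp
    ultimately have rn: "r (i+1) \<noteq> 0" by auto
    have "s (i+1) * r (i+1) - s i * r i = e * (s i * r (i+1) - s (i+1) * r i)"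
      using AUX[of "i+1"] i by simp
    then have "r (i+1) * (s (i+1) - e * s i) = 0" using ri by algebra
    then have "s (i+1) = e * s i" using rn by simp
    then show False using x feas[OF i] by simp
  qed
  have LOC: "(s 1 - e) * real (c i) * (s (i-1) - s i) * (s (i+1) - s (i-1))
        = k * (s 1 - 1) * (s (i-1) - e * s i) * (s (i+1) - s 1 * s i)
      \<and> (s 1 - e) * real (b i) * (s (i+1) - s i) * (s (i-1) - s (i+1))
        = k * (s 1 - 1) * (s (i+1) - e * s i) * (s (i-1) - s 1 * s i)"
    if i: "1 \<le> i" "i < D" for i
  proof -
    have A2i: "s (i+1) * r (i+1) - s i * r i = e * (s i * r (i+1) - s (i+1) * r i)"
      using AUX[of "i+1"] i by simp
    show ?thesis
      using local_id[OF RS[OF i] RR[OF i] AUX[of i] A2i A1' rnz[OF i] em1] i by simp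
  qed
  have s0z: False if "s j = 0" "s (Suc j) = 0" "j < D" for j
    using back_zero[of D c s b "k * (s 1 - 1)" j, OF RS cpos] that s0 by simp
  have zy: "s (i+1) \<noteq> s i" if i: "1 \<le> i" "i < D" for i
  proof
    assume zy: "s (i+1) = s i"
    have "k * (s 1 - 1) * (s i - e * s i) * (s (i-1) - s 1 * s i) = 0"
      using LOC[OF i] zy by simp
    then have "s i - e * s i = 0 \<or> s (i-1) - s 1 * s i = 0" using kpos s1 by simp
    moreover have "s i - e * s i = s i * (1 - e)" by (simp add: algebra_simps)
    ultimately have "s i = 0 \<or> s (i-1) = s 1 * s i" using e1 by simp
    then show False
    proof
      assume "s i = 0" then show False using s0z[of i] zy i by simp
    next
      assume x: "s (i-1) = s 1 * s i"
      have "(s 1 - 1) * s i * (real (c i) - k) = 0" using RS[OF i] x zy by algebra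
      moreover have "real (c i) \<noteq> k" using kABC[OF i] Bpos[of i] i by simp
      ultimately have "s i = 0" using s1 by simp
      then show False using s0z[of i] zy i by simp
    qed
  qed
  have xy: "s (i-1) \<noteq> s i" if i: "1 \<le> i" "i < D" for i
  proof
    assume xy: "s (i-1) = s i"
    have "k * (s 1 - 1) * (s i - e * s i) * (s (i+1) - s 1 * s i) = 0"
      using LOC[OF i] xy by simp
    then have "s i - e * s i = 0 \<or> s (i+1) - s 1 * s i = 0" using kpos s1 by simp
    moreover have "s i - e * s i = s i * (1 - e)" by (simp add: algebra_simps)
    ultimately have "s i = 0 \<or> s (i+1) = s 1 * s i" using e1 by simp
    then show False
    proof
      assume si: "s i = 0"
      have "Suc (i-1) = i" "i - 1 < D" using i by auto
      then show False using s0z[of "i-1"] si xy by metis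
    next
      assume z: "s (i+1) = s 1 * s i"
      have "(s 1 - 1) * s i * (real (b i) - k) = 0" using RS[OF i] xy z by algebra
      moreover have "real (b i) \<noteq> k" using kABC[OF i] Cpos[OF i] by simp
      ultimately have si: "s i = 0" using s1 by simp
      have "Suc (i-1) = i" "i - 1 < D" using i by auto
      then show False using s0z[of "i-1"] si xy by metis
    qed
  qed
  have L1: "(s 1 - e) * (1 - s 1) * (s 2 - 1) = k * (s 1 - 1) * (1 - e * s 1) * (s 2 - s 1 * s 1)"
    using conjunct1[OF LOC[of 1]] D3 s0 c1 by (simp add: numeral_2_eq_2)
  have "(s 1 - e) * (1 - s 1) * (s 2 - 1) \<noteq> 0" using se s1 s2ne by simp
  then have nz1: "1 - e * s 1 \<noteq> 0" and nz2: "s 2 - s 1 * s 1 \<noteq> 0" using L1 by auto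
  have hH: "h = k * (s 1 - 1) / (s 1 - e)"
  proof -
    have "(1 - s 1) * (1 - s 2) * (s 1 - e) = k * (s 1 - 1) * ((s 1 ^ 2 - s 2) * (1 - e * s 1))"
      using L1 by (simp add: power2_eq_square algebra_simps)
    moreover have "(s 1 ^ 2 - s 2) * (1 - e * s 1) \<noteq> 0" using nz1 nz2 by (simp add: power2_eq_square)
    ultimately show ?thesis unfolding hdef using se by (simp add: field_simps)
  qed
  have kf: "real (b 0) = h * (s 1 - e) / (s 1 - 1)"
  proof -
    have hs: "h * (s 1 - e) = k * (s 1 - 1)" using se unfolding hH by simp
    have "s 1 - 1 \<noteq> 0" using s1 by simp
    then show ?thesis unfolding hs k_def by simp
  qed
  have forms: "real (b i) = h * ((s (i - 1) - s 1 * s i) * (s (i + 1) - e * s i))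
                            / ((s (i - 1) - s (i + 1)) * (s (i + 1) - s i)) \<and>
             real (c i) = h * ((s (i + 1) - s 1 * s i) * (s (i - 1) - e * s i))
                            / ((s (i + 1) - s (i - 1)) * (s (i - 1) - s i))"
    if i: "1 \<le> i" "i < D" for i
  proof
    show "real (b i) = h * ((s (i - 1) - s 1 * s i) * (s (i + 1) - e * s i))
                            / ((s (i - 1) - s (i + 1)) * (s (i + 1) - s i))"
    proof (rule solve_div[OF _ _ se hH])
      show "(s 1 - e) * real (b i) * ((s (i - 1) - s (i + 1)) * (s (i + 1) - s i))
          = k * (s 1 - 1) * ((s (i - 1) - s 1 * s i) * (s (i + 1) - e * s i))"
        using conjunct2[OF LOC[OF i]] by (simp add: algebra_simps)
      show "(s (i - 1) - s (i + 1)) * (s (i + 1) - s i) \<noteq> 0" using feas[OF i] zy[OF i] by simp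
    qed
    show "real (c i) = h * ((s (i + 1) - s 1 * s i) * (s (i - 1) - e * s i))
                            / ((s (i + 1) - s (i - 1)) * (s (i - 1) - s i))"
    proof (rule solve_div[OF _ _ se hH])
      show "(s 1 - e) * real (c i) * ((s (i + 1) - s (i - 1)) * (s (i - 1) - s i))
          = k * (s 1 - 1) * ((s (i + 1) - s 1 * s i) * (s (i - 1) - e * s i))"
        using conjunct1[OF LOC[OF i]] by (simp add: algebra_simps)
      show "(s (i + 1) - s (i - 1)) * (s (i - 1) - s i) \<noteq> 0" using feas[OF i] xy[OF i] by simp
    qed
  qed
  have iff: "1 \<le> i \<and> i < D" if "i \<in> {1..D-1}" for i using D3 that by auto
  have F1: "\<forall>i\<in>{1..D-1}.
             real (b i) = h * ((s (i - 1) - s 1 * s i) * (s (i + 1) - e * s i))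
                            / ((s (i - 1) - s (i + 1)) * (s (i + 1) - s i)) \<and>
             real (c i) = h * ((s (i + 1) - s 1 * s i) * (s (i - 1) - e * s i))
                            / ((s (i + 1) - s (i - 1)) * (s (i - 1) - s i))"
    using forms iff by blast
  have F2: "\<forall>i\<in>{1..D-1}. s (i - 1) - s (i + 1) \<noteq> 0 \<and> s (i + 1) - s i \<noteq> 0 \<and>
                          s (i + 1) - s (i - 1) \<noteq> 0 \<and> s (i - 1) - s i \<noteq> 0"
  proof
    fix i assume "i \<in> {1..D-1}"
    then have i: "1 \<le> i" "i < D" using iff by auto
    show "s (i - 1) - s (i + 1) \<noteq> 0 \<and> s (i + 1) - s i \<noteq> 0 \<and>
                          s (i + 1) - s (i - 1) \<noteq> 0 \<and> s (i - 1) - s i \<noteq> 0"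
      using feas[OF i] zy[OF i] xy[OF i] by auto
  qed
  have "s 1 - 1 \<noteq> 0" using s1 by simp
  then show ?thesis
    using s0 e1 em1 kf F1 F2 by blast
qed

primrec rseq :: "(nat \<Rightarrow> real) \<Rightarrow> real \<Rightarrow> nat \<Rightarrow> real" where
  "rseq s e 0 = 1"
| "rseq s e (Suc j) = rseq s e j * (s j - e * s (Suc j)) / (s (Suc j) - e * s j)"

lemma pcs_of_rec:
  assumes f0: "f 0 = 1" and a0: "a 0 = 0"
    and cab: "\<And>i. 1 \<le> i \<Longrightarrow> i < D \<Longrightarrow> c i + a i + b i = b 0"
    and rc: "\<And>i. 1 \<le> i \<Longrightarrow> i < D \<Longrightarrow> real (c i) * (f (i-1) - f i) + real (b i) * (f (i+1) - f i)
        = real (b 0) * (f 1 - 1) * f i"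
  shows "pseudo_cosine_for D a b c (real (b 0) * f 1) f"
  unfolding pseudo_cosine_for_def
proof (intro conjI allI impI)
  show "f 0 = 1" by (fact f0)
  fix i assume iD: "i < D"
  show "(if i = 0 then 0 else real (c i) * f (i - 1)) + real (a i) * f i + real (b i) * f (i + 1) =
         real (b 0) * f 1 * f i"
  proof (cases "i = 0")
    case True then show ?thesis using a0 f0 by simp
  next
    case False
    then have i: "1 \<le> i" "i < D" using iD by auto
    have "real (c i + a i + b i) = real (b 0)" using cab[OF i] by simp
    then have ai: "real (a i) = real (b 0) - real (b i) - real (c i)" by simp
    have "real (c i) * f (i - 1) + real (a i) * f i + real (b i) * f (i + 1) - real (b 0) * f 1 * f i
       = real (c i) * (f (i-1) - f i) + real (b i) * (f (i+1) - f i) - real (b 0) * (f 1 - 1) * f i"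
      unfolding ai by (simp add: algebra_simps)
    then show ?thesis using rc[OF i] False by simp
  qed
qed

lemma alg_aux:
  fixes X Y p q e :: real
  assumes H: "q * (Y - e * X) = p * (X - e * Y)" and nz: "Y - e * X \<noteq> 0"
  shows "Y * q - X * p = e * (X * q - Y * p)"
proof -
  have "(Y - e * X) * (Y * q - X * p - e * (X * q - Y * p)) = 0" using H by algebra
  then show ?thesis using nz by simp
qed

lemma bwd:
  fixes a b c :: "nat \<Rightarrow> nat" and s :: "nat \<Rightarrow> real" and e h :: real and D :: nat
  assumes D3: "D \<ge> 3" and a0: "a 0 = 0" and c1: "c 1 = 1"
    and cab: "\<And>i. 1 \<le> i \<Longrightarrow> i < D \<Longrightarrow> c i + a i + b i = b 0"
    and bpos: "\<And>i. i < D \<Longrightarrow> b i > 0" and cpos: "\<And>i. 1 \<le> i \<Longrightarrow> i < D \<Longrightarrow> c i > 0"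
    and s0: "s 0 = 1" and e1: "e \<noteq> 1" and em1: "e \<noteq> -1"
    and kf: "real (b 0) = h * (s 1 - e) / (s 1 - 1)"
    and F: "\<forall>i\<in>{1..D-1}.
             real (b i) = h * ((s (i - 1) - s 1 * s i) * (s (i + 1) - e * s i))
                            / ((s (i - 1) - s (i + 1)) * (s (i + 1) - s i)) \<and>
             real (c i) = h * ((s (i + 1) - s 1 * s i) * (s (i - 1) - e * s i))
                            / ((s (i + 1) - s (i - 1)) * (s (i - 1) - s i))"
    and s1': "s 1 - 1 \<noteq> 0"
    and NZ: "\<forall>i\<in>{1..D-1}. s (i - 1) - s (i + 1) \<noteq> 0 \<and> s (i + 1) - s i \<noteq> 0 \<and>
                          s (i + 1) - s (i - 1) \<noteq> 0 \<and> s (i - 1) - s i \<noteq> 0"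
  shows "a 1 \<noteq> 0 \<and> feasible_pcs D a b c s \<and> aux_param D a b c s e \<and>
          h = (1 - s 1) * (1 - s 2) / ((s 1 ^ 2 - s 2) * (1 - e * s 1))"
proof -
  have D0: "0 < D" using D3 by simp
  have iff: "i \<in> {1..D-1}" if "1 \<le> i" "i < D" for i using that by auto
  define k where "k = real (b 0)"
  have kpos: "k > 0" using bpos[OF D0] k_def by simp
  have s1: "s 1 \<noteq> 1" using s1' by simp
  have nz: "s (i - 1) \<noteq> s (i + 1)" "s (i + 1) \<noteq> s i" "s (i - 1) \<noteq> s i"
    if "1 \<le> i" "i < D" for i using NZ iff[OF that] by auto
  have BF: "real (b i) * ((s (i - 1) - s (i + 1)) * (s (i + 1) - s i))
          = h * ((s (i - 1) - s 1 * s i) * (s (i + 1) - e * s i))" if i: "1 \<le> i" "i < D" for i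
  proof -
    have "(s (i - 1) - s (i + 1)) * (s (i + 1) - s i) \<noteq> 0" using nz[OF i] by simp
    then show ?thesis using F iff[OF i] by (simp add: nonzero_eq_divide_eq)
  qed
  have CF: "real (c i) * ((s (i + 1) - s (i - 1)) * (s (i - 1) - s i))
          = h * ((s (i + 1) - s 1 * s i) * (s (i - 1) - e * s i))" if i: "1 \<le> i" "i < D" for i
  proof -
    have "(s (i + 1) - s (i - 1)) * (s (i - 1) - s i) \<noteq> 0" using nz[OF i] by simp
    then show ?thesis using F iff[OF i] by (simp add: nonzero_eq_divide_eq)
  qed
  have hk: "h * (s 1 - e) = k * (s 1 - 1)" using kf s1' unfolding k_def by (simp add: field_simps)
  have se: "s 1 - e \<noteq> 0" and h0: "h \<noteq> 0" using hk kpos s1' by auto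
  have s2ne: "s 2 \<noteq> 1" using nz(1)[of 1] D3 s0 by (simp add: numeral_2_eq_2)
  have C1: "(s 2 - 1) * (1 - s 1) = h * ((s 2 - s 1 * s 1) * (1 - e * s 1))"
    using CF[of 1] D3 s0 c1 by (simp add: numeral_2_eq_2)
  have "(s 2 - 1) * (1 - s 1) \<noteq> 0" using s2ne s1 by simp
  then have nz1: "1 - e * s 1 \<noteq> 0" and nz2: "s 2 - s 1 * s 1 \<noteq> 0" using C1 by auto
  have N1: "s (i - 1) - e * s i \<noteq> 0" if i: "1 \<le> i" "i < D" for i
  proof
    assume "s (i - 1) - e * s i = 0"
    then have "real (c i) * ((s (i + 1) - s (i - 1)) * (s (i - 1) - s i)) = 0" using CF[OF i] by simp
    moreover have "real (c i) > 0" using cpos[OF i] by simp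
    ultimately show False using nz[OF i] by simp
  qed
  have N2: "s (i + 1) - e * s i \<noteq> 0" if i: "1 \<le> i" "i < D" for i
  proof
    assume "s (i + 1) - e * s i = 0"
    then have "real (b i) * ((s (i - 1) - s (i + 1)) * (s (i + 1) - s i)) = 0" using BF[OF i] by simp
    moreover have "real (b i) > 0" using bpos i by simp
    ultimately show False using nz[OF i] by simp
  qed
  have Den: "s (Suc j) - e * s j \<noteq> 0" if "j < D" for j
  proof (cases "j = 0")
    case True then show ?thesis using se s0 by simp
  next
    case False then show ?thesis using N2[of j] that by simp
  qed
  define \<rho> where "\<rho> = rseq s e"
  have RHO: "\<rho> i * (s i - e * s (i - 1)) = \<rho> (i - 1) * (s (i - 1) - e * s i)" if i: "1 \<le> i" "i \<le> D" for i
  proof -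
    obtain j where j: "i = Suc j" using i by (cases i) auto
    have "s (Suc j) - e * s j \<noteq> 0" using Den[of j] i j by simp
    then show ?thesis unfolding \<rho>_def j by simp
  qed
  have r0: "\<rho> 0 = 1" unfolding \<rho>_def by simp
  have r1: "\<rho> 1 * (s 1 - e) = 1 - e * s 1" using RHO[of 1] D3 s0 r0 by simp
  have r1ne: "\<rho> 1 \<noteq> 1"
  proof
    assume "\<rho> 1 = 1"
    then have "(1 + e) * (s 1 - 1) = 0" using r1 by algebra
    then show False using em1 s1' by (simp add: add_eq_0_iff)
  qed
  have kr: "k * (\<rho> 1 - 1) = - h * (1 + e)"
  proof -
    have "(s 1 - e) * (k * (\<rho> 1 - 1) + h * (1 + e)) = 0" using r1 hk by algebra
    then show ?thesis using se by simp
  qed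
  have ksr: "k * (s 1 * \<rho> 1 - 1) = - h * e * (1 + s 1)"
  proof -
    have "(s 1 - e) * (k * (s 1 * \<rho> 1 - 1) + h * e * (1 + s 1)) = 0" using r1 hk by algebra
    then show ?thesis using se by simp
  qed
  have RS: "real (c i) * (s (i-1) - s i) + real (b i) * (s (i+1) - s i) = k * (s 1 - 1) * s i"
    if i: "1 \<le> i" "i < D" for i
  proof -
    have "real (c i) * (s (i-1) - s i) + real (b i) * (s (i+1) - s i) = h * (s 1 - e) * s i"
      by (rule alg_s[OF CF[OF i] BF[OF i]]) (use nz[OF i] in auto)
    then show ?thesis using hk by simp
  qed
  have H3: "\<rho> i * (s i - e * s (i - 1)) = \<rho> (i - 1) * (s (i - 1) - e * s i)" if "1 \<le> i" "i < D" for i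
    using RHO that by simp
  have H4: "\<rho> (i+1) * (s (i+1) - e * s i) = \<rho> i * (s i - e * s (i+1))" if "1 \<le> i" "i < D" for i
    using RHO[of "i+1"] that by simp
  have Dx: "s i - e * s (i - 1) \<noteq> 0" if "1 \<le> i" "i < D" for i
    using Den[of "i-1"] that by simp
  have Dz: "s (i+1) - e * s i \<noteq> 0" if "1 \<le> i" "i < D" for i
    using Den[of i] that by simp
  have RR: "real (c i) * (\<rho> (i-1) - \<rho> i) + real (b i) * (\<rho> (i+1) - \<rho> i) = k * (\<rho> 1 - 1) * \<rho> i"
    if i: "1 \<le> i" "i < D" for i
  proof -
    have "real (c i) * (\<rho> (i-1) - \<rho> i) + real (b i) * (\<rho> (i+1) - \<rho> i) = - h * (1 + e) * \<rho> i"
      by (rule alg_r[OF CF[OF i] BF[OF i] H3[OF i] H4[OF i]]) (use nz[OF i] Dx[OF i] Dz[OF i] in auto)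
    then show ?thesis using kr by simp
  qed
  have RP: "real (c i) * (s (i-1) * \<rho> (i-1) - s i * \<rho> i) + real (b i) * (s (i+1) * \<rho> (i+1) - s i * \<rho> i)
      = k * (s 1 * \<rho> 1 - 1) * (s i * \<rho> i)"
    if i: "1 \<le> i" "i < D" for i
  proof -
    have "real (c i) * (s (i-1) * \<rho> (i-1) - s i * \<rho> i) + real (b i) * (s (i+1) * \<rho> (i+1) - s i * \<rho> i)
       = - h * e * (1 + s 1) * (s i * \<rho> i)"
      by (rule alg_p[OF CF[OF i] BF[OF i] H3[OF i] H4[OF i]]) (use nz[OF i] Dx[OF i] Dz[OF i] in auto)
    then show ?thesis using ksr by simp
  qed
  have ps: "pseudo_cosine_for D a b c (k * s 1) s"
    unfolding k_def by (rule pcs_of_rec[where f=s and a=a and b=b and c=c and D=D, OF s0 a0 cab]) (use RS k_def in auto)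
  have pr: "pseudo_cosine_for D a b c (k * \<rho> 1) \<rho>"
    unfolding k_def by (rule pcs_of_rec[where f=\<rho> and a=a and b=b and c=c and D=D, OF r0 a0 cab]) (use RR k_def in auto)
  have pp: "pseudo_cosine_for D a b c (k * (s 1 * \<rho> 1)) (\<lambda>i. s i * \<rho> i)"
    unfolding k_def by (rule pcs_of_rec[where f="\<lambda>i. s i * \<rho> i" and a=a and b=b and c=c and D=D, OF _ a0 cab]) (use RP k_def s0 r0 in auto)
  have aux: "aux_param_pair D s \<rho> e"
    unfolding aux_param_pair_def
  proof
    fix i assume "i \<in> {1..D}"
    then have i: "1 \<le> i" "i \<le> D" by auto
    have "s i - e * s (i - 1) \<noteq> 0" using Den[of "i-1"] i by simp
    then show "s i * \<rho> i - s (i - 1) * \<rho> (i - 1) = e * (s (i - 1) * \<rho> i - s i * \<rho> (i - 1))"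
      using alg_aux[OF RHO[OF i]] by simp
  qed
  have nts: "nontrivial_pcs D a b c s" unfolding nontrivial_pcs_def pseudo_cosine_def using ps s1 by blast
  have ntr: "nontrivial_pcs D a b c \<rho>" unfolding nontrivial_pcs_def pseudo_cosine_def using pr r1ne by blast
  have tp: "tight_pair D a b c s \<rho>" unfolding tight_pair_def pseudo_cosine_def using ps pr pp by blast
  have feas: "feasible_pcs D a b c s"
    unfolding feasible_pcs_def tight_pcs_def
    using nts ntr tp ps nz(1) unfolding pseudo_cosine_def by auto
  have ap: "aux_param D a b c s e" unfolding aux_param_def using nts ntr tp aux by blast
  have a1: "a 1 \<noteq> 0"
  proof
    assume a10: "a 1 = 0"
    have k1: "k = 1 + real (b 1)"
    proof -
      have "real (c 1 + a 1 + b 1) = k" using cab[of 1] D3 k_def by simp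
      then show ?thesis using c1 a10 by simp
    qed
    have RS1: "(1 - s 1) + real (b 1) * (s 2 - s 1) = k * (s 1 - 1) * s 1"
      using RS[of 1] D3 s0 c1 by (simp add: numeral_2_eq_2)
    have RR1: "(1 - \<rho> 1) + real (b 1) * (\<rho> 2 - \<rho> 1) = k * (\<rho> 1 - 1) * \<rho> 1"
      using RR[of 1] D3 r0 c1 by (simp add: numeral_2_eq_2)
    have RP1: "(1 - s 1 * \<rho> 1) + real (b 1) * (s 2 * \<rho> 2 - s 1 * \<rho> 1) = k * (s 1 * \<rho> 1 - 1) * (s 1 * \<rho> 1)"
      using RP[of 1] D3 r0 s0 c1 by (simp add: numeral_2_eq_2)
    have S: "real (b 1) * s 2 = k * s 1 ^ 2 - 1" using RS1 k1 by algebra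
    have R: "real (b 1) * \<rho> 2 = k * \<rho> 1 ^ 2 - 1" using RR1 k1 by algebra
    have P: "real (b 1) * (s 2 * \<rho> 2) = k * s 1 ^ 2 * \<rho> 1 ^ 2 - 1" using RP1 k1 by algebra
    have "k * (s 1 ^ 2 - 1) * (\<rho> 1 ^ 2 - 1) = 0" using S R P k1 by algebra
    then have "s 1 ^ 2 - 1 = 0 \<or> \<rho> 1 ^ 2 - 1 = 0" using kpos by simp
    then have sm: "s 1 = -1"
    proof
      assume "s 1 ^ 2 - 1 = 0"
      then have "(s 1 - 1) * (s 1 + 1) = 0" by algebra
      then show ?thesis using s1 by simp
    next
      assume "\<rho> 1 ^ 2 - 1 = 0"
      then have "(\<rho> 1 - 1) * (\<rho> 1 + 1) = 0" by algebra
      then have "\<rho> 1 = -1" using r1ne by simp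
      then have "(1 - e) * (s 1 + 1) = 0" using r1 by algebra
      then show ?thesis using e1 by simp
    qed
    have "real (b 1) * (s 2 - 1) = 0" using S sm k1 by algebra
    moreover have "real (b 1) > 0" using bpos[of 1] D3 by simp
    ultimately show False using s2ne by simp
  qed
  have hf: "h = (1 - s 1) * (1 - s 2) / ((s 1 ^ 2 - s 2) * (1 - e * s 1))"
  proof -
    have "(s 1 ^ 2 - s 2) * (1 - e * s 1) \<noteq> 0" using nz1 nz2 by (simp add: power2_eq_square)
    moreover have "h * ((s 1 ^ 2 - s 2) * (1 - e * s 1)) = (1 - s 1) * (1 - s 2)" using C1 by algebra
    ultimately show ?thesis by (simp add: eq_divide_eq)
  qed
  show ?thesis using a1 feas ap hf by blast
qed

theorem theorem15p2:
  fixes V :: "'a set" and E :: "'a \<Rightarrow> 'a \<Rightarrow> bool" and D :: nat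
    and a b c :: "nat \<Rightarrow> nat" and s :: "nat \<Rightarrow> real" and e h :: real
  assumes "distance_regular V E D a b c" and "D \<ge> 3"
  shows "(a 1 \<noteq> 0 \<and> feasible_pcs D a b c s \<and> aux_param D a b c s e \<and>
          h = (1 - s 1) * (1 - s 2) / ((s 1 ^ 2 - s 2) * (1 - e * s 1)))
     \<longleftrightarrow>
         (s 0 = 1 \<and> e \<noteq> 1 \<and> e \<noteq> -1 \<and>
          real (b 0) = h * (s 1 - e) / (s 1 - 1) \<and>
          (\<forall>i\<in>{1..D-1}.
             real (b i) = h * ((s (i - 1) - s 1 * s i) * (s (i + 1) - e * s i))
                            / ((s (i - 1) - s (i + 1)) * (s (i + 1) - s i)) \<and>
             real (c i) = h * ((s (i + 1) - s 1 * s i) * (s (i - 1) - e * s i))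
                            / ((s (i + 1) - s (i - 1)) * (s (i - 1) - s i))) \<and>
          s 1 - 1 \<noteq> 0 \<and>
          (\<forall>i\<in>{1..D-1}. s (i - 1) - s (i + 1) \<noteq> 0 \<and> s (i + 1) - s i \<noteq> 0 \<and>
                          s (i + 1) - s (i - 1) \<noteq> 0 \<and> s (i - 1) - s i \<noteq> 0))"
proof -
  have D1: "D \<ge> 1" using assms(2) by simp
  note f = drg_facts[OF assms(1) D1]
  show ?thesis
  proof
    assume L: "a 1 \<noteq> 0 \<and> feasible_pcs D a b c s \<and> aux_param D a b c s e \<and>
          h = (1 - s 1) * (1 - s 2) / ((s 1 ^ 2 - s 2) * (1 - e * s 1))"
    show "s 0 = 1 \<and> e \<noteq> 1 \<and> e \<noteq> -1 \<and>
          real (b 0) = h * (s 1 - e) / (s 1 - 1) \<and>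
          (\<forall>i\<in>{1..D-1}.
             real (b i) = h * ((s (i - 1) - s 1 * s i) * (s (i + 1) - e * s i))
                            / ((s (i - 1) - s (i + 1)) * (s (i + 1) - s i)) \<and>
             real (c i) = h * ((s (i + 1) - s 1 * s i) * (s (i - 1) - e * s i))
                            / ((s (i + 1) - s (i - 1)) * (s (i - 1) - s i))) \<and>
          s 1 - 1 \<noteq> 0 \<and>
          (\<forall>i\<in>{1..D-1}. s (i - 1) - s (i + 1) \<noteq> 0 \<and> s (i + 1) - s i \<noteq> 0 \<and>
                          s (i + 1) - s (i - 1) \<noteq> 0 \<and> s (i - 1) - s i \<noteq> 0)"
      using fwd[OF assms(2) f(1) f(2) f(3) f(4) f(5)] L by blast
  next
    assume R: "s 0 = 1 \<and> e \<noteq> 1 \<and> e \<noteq> -1 \<and>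
          real (b 0) = h * (s 1 - e) / (s 1 - 1) \<and>
          (\<forall>i\<in>{1..D-1}.
             real (b i) = h * ((s (i - 1) - s 1 * s i) * (s (i + 1) - e * s i))
                            / ((s (i - 1) - s (i + 1)) * (s (i + 1) - s i)) \<and>
             real (c i) = h * ((s (i + 1) - s 1 * s i) * (s (i - 1) - e * s i))
                            / ((s (i + 1) - s (i - 1)) * (s (i - 1) - s i))) \<and>
          s 1 - 1 \<noteq> 0 \<and>
          (\<forall>i\<in>{1..D-1}. s (i - 1) - s (i + 1) \<noteq> 0 \<and> s (i + 1) - s i \<noteq> 0 \<and>
                          s (i + 1) - s (i - 1) \<noteq> 0 \<and> s (i - 1) - s i \<noteq> 0)"
    show "a 1 \<noteq> 0 \<and> feasible_pcs D a b c s \<and> aux_param D a b c s e \<and>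
          h = (1 - s 1) * (1 - s 2) / ((s 1 ^ 2 - s 2) * (1 - e * s 1))"
      using bwd[OF assms(2) f(1) f(2) f(3) f(4) f(5)] R by blast
  qed
qed

end
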